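(* Let $d\ge1$ and $0\le r<d$ be integers, and let $\zeta_{2d}=e^{\pi \mathrm{i}/d}$. Then $\operatorname{num}(r,\zeta_{2d})\neq 0$.
   Context: A partition $\lambda$ of $n\ge 0$ (written $\lambda\vdash n$) is a finite nonincreasing sequence of positive integers summing to $n$; $m_\lambda(i)$ denotes the number of parts of $\lambda$ equal to $i$. For $\lambda\vdash n$ define $h_\lambda(x)=\prod_{i\ge1}(1+x^i)^{\lfloor n/i\rfloor-m_\lambda(i)}\in\mathbb{Z}[x]$. Let $G(n,x)=\gcd\{h_\lambda(x):\lambda\vdash n\}$ in $\mathbb{Z}[x]$ (normalized with positive leading coefficient) and $\operatorname{num}(n,x)=\frac{1}{G(n,x)}\sum_{\lambda\vdash n}h_\lambda(x)$. Conventions for $n=0$: $G(0,x)=1$, $h_\emptyset(x)=1$, $\operatorname{num}(0,x)=1$. *)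

theory Defs
  imports Complex_Main "HOL-Computational_Algebra.Computational_Algebra"
begin

definition partitions :: "nat \<Rightarrow> nat list set" where
  "partitions n = {lam. sorted_wrt (\<ge>) lam \<and> (\<forall>p\<in>set lam. p > 0) \<and> sum_list lam = n}"

definition mult_part :: "nat list \<Rightarrow> nat \<Rightarrow> nat" where
  "mult_part lam i = count_list lam i"

text \<open>h_lambda(x) for lambda a partition of n = sum_list lambda; factors with i > n are 1.\<close>
definition h_poly :: "nat list \<Rightarrow> int poly" where
  "h_poly lam = (let n = sum_list lam in
     \<Prod>i\<in>{1..n}. (1 + monom 1 i) ^ (n div i - mult_part lam i))"

definition G_poly :: "nat \<Rightarrow> int poly" where
  "G_poly n = Gcd (h_poly ` partitions n)"

definition num_poly :: "nat \<Rightarrow> int poly" where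
  "num_poly n = (\<Sum>lam\<in>partitions n. h_poly lam) div G_poly n"

end

theory Submission
  imports Defs
begin

lemma mp_add: "map_poly (of_int::int\<Rightarrow>'a::comm_ring_1) (p + q) = map_poly of_int p + map_poly of_int q"
  by (rule poly_eqI) (simp add: coeff_map_poly)

lemma mp_mult: "map_poly (of_int::int\<Rightarrow>'a::comm_ring_1) (p * q) = map_poly of_int p * map_poly of_int q"
  by (rule poly_eqI) (simp add: coeff_map_poly coeff_mult)

lemma ev_mult: "poly (map_poly (of_int::int\<Rightarrow>'a::comm_ring_1) (p * q)) z
   = poly (map_poly of_int p) z * poly (map_poly of_int q) z"
  by (simp add: mp_mult)

lemma ev_add: "poly (map_poly (of_int::int\<Rightarrow>'a::comm_ring_1) (p + q)) z
   = poly (map_poly of_int p) z + poly (map_poly of_int q) z"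
  by (simp add: mp_add)

lemma ev_one: "poly (map_poly (of_int::int\<Rightarrow>'a::comm_ring_1) 1) z = 1"
  by simp

lemma ev_power: "poly (map_poly (of_int::int\<Rightarrow>'a::comm_ring_1) (p ^ n)) z
   = poly (map_poly of_int p) z ^ n"
  by (induction n) (simp_all add: ev_mult)

lemma ev_prod: "poly (map_poly (of_int::int\<Rightarrow>'a::comm_ring_1) (\<Prod>i\<in>A. f i)) z
   = (\<Prod>i\<in>A. poly (map_poly of_int (f i)) z)"
  by (induction A rule: infinite_finite_induct) (simp_all add: ev_mult)

lemma ev_sum: "poly (map_poly (of_int::int\<Rightarrow>'a::comm_ring_1) (\<Sum>i\<in>A. f i)) z
   = (\<Sum>i\<in>A. poly (map_poly of_int (f i)) z)"
  by (induction A rule: infinite_finite_induct) (simp_all add: ev_add)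

lemma ev_h: "poly (map_poly (of_int::int\<Rightarrow>'a::comm_ring_1) (1 + monom 1 i)) z = 1 + z ^ i"
  by (simp add: ev_add map_poly_monom poly_monom)

lemma length_le_sum: "(\<forall>p\<in>set xs. (p::nat) > 0) \<Longrightarrow> length xs \<le> sum_list xs"
  by (induction xs) auto

lemma mem_le_sl: "(x::nat) \<in> set xs \<Longrightarrow> x \<le> sum_list xs"
  by (induction xs) auto

lemma finite_partitions: "finite (partitions n)"
proof -
  have "partitions n \<subseteq> {xs. set xs \<subseteq> {0..n} \<and> length xs \<le> n}"
    unfolding partitions_def using length_le_sum mem_le_sl by fastforce
  moreover have "finite {xs. set xs \<subseteq> {0..n} \<and> length xs \<le> n}"
    by (rule finite_lists_length_le) simp
  ultimately show ?thesis by (rule finite_subset)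
qed

lemma partitions_ne: "replicate n 1 \<in> partitions n"
  unfolding partitions_def by (auto simp: sorted_wrt_iff_nth_less sum_list_replicate)

lemma sum_count:
  assumes "lam \<in> partitions n"
  shows "(\<Sum>i\<in>{1..n}. i * count_list lam i) = n"
proof -
  have sub: "set lam \<subseteq> {1..n}"
    using assms unfolding partitions_def using mem_le_sl
    by (auto simp: Suc_le_eq)
  have "n = sum_list (map (\<lambda>x. x) lam)" using assms by (simp add: partitions_def)
  also have "\<dots> = (\<Sum>x\<in>set lam. count_list lam x * x)" by (rule sum_list_map_eq_sum_count)
  also have "\<dots> = (\<Sum>x\<in>set lam. x * count_list lam x)" by (simp add: mult.commute)
  also have "\<dots> = (\<Sum>i\<in>{1..n}. i * count_list lam i)"
    by (rule sum.mono_neutral_left) (use sub in \<open>auto simp: count_list_0_iff\<close>)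
  finally show ?thesis by simp
qed

lemma count_le:
  assumes "lam \<in> partitions n" "i \<in> {1..n}"
  shows "count_list lam i \<le> n div i"
proof -
  have "i * count_list lam i \<le> (\<Sum>i\<in>{1..n}. i * count_list lam i)"
    by (rule member_le_sum) (use assms in auto)
  then have "i * count_list lam i \<le> n" using sum_count[OF assms(1)] by simp
  then show ?thesis using assms(2) by (simp add: less_eq_div_iff_mult_less_eq mult.commute)
qed

lemma exponent_sum:
  assumes "lam \<in> partitions n"
  shows "(\<Sum>i\<in>{1..n}. i * (n div i - count_list lam i)) = (\<Sum>i\<in>{1..n}. i * (n div i)) - n"
proof -
  have "(\<Sum>i\<in>{1..n}. i * (n div i - count_list lam i)) + (\<Sum>i\<in>{1..n}. i * count_list lam i)
      = (\<Sum>i\<in>{1..n}. i * (n div i))"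
    unfolding sum.distrib[symmetric]
    by (rule sum.cong) (use count_le[OF assms] in \<open>auto simp: diff_mult_distrib2\<close>)
  then show ?thesis using sum_count[OF assms] by simp
qed

lemma one_plus_exp:
  fixes s :: real
  shows "1 + exp (2 * (complex_of_real s * \<i>)) = exp (complex_of_real s * \<i>) * complex_of_real (2 * cos s)"
proof -
  have c: "cos (s * 2) = 2 * cos s ^ 2 - 1" using cos_double_cos[of s] by (simp add: mult.commute)
  have d: "sin (s * 2) = 2 * sin s * cos s" using sin_double[of s] by (simp add: mult.commute)
  show ?thesis by (simp add: complex_eq_iff Re_exp Im_exp c d power2_eq_square algebra_simps)
qed

theorem lemma5:
  fixes d r :: nat
  assumes "d \<ge> 1" and "r < d"
  shows "poly (map_poly of_int (num_poly r)) (exp (complex_of_real pi * \<i> / of_nat d)) \<noteq> (0::complex)"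
proof
  define z where "z = exp (complex_of_real pi * \<i> / of_nat d)"
  define w where "w = exp (complex_of_real (pi / (2 * d)) * \<i>)"
  define a where "a = (\<lambda>i::nat. 2 * cos (pi * i / (2 * d)))"
  define K where "K = (\<Sum>i\<in>{1..r}. i * (r div i)) - r"
  define A where "A = (\<lambda>lam. \<Prod>i\<in>{1..r}. a i ^ (r div i - count_list lam i))"
  assume H: "poly (map_poly of_int (num_poly r)) z = 0"
  let ?S = "\<Sum>lam\<in>partitions r. h_poly lam"
  have dv: "G_poly r dvd ?S"
    unfolding G_poly_def by (rule dvd_sum) (rule Gcd_dvd, blast)
  have eq: "?S = num_poly r * G_poly r"
    unfolding num_poly_def using dv by simp
  have S0: "poly (map_poly of_int ?S) z = 0"
    by (subst eq, simp only: ev_mult H) simp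
  have apos: "a i > 0" if "i \<in> {1..r}" for i
  proof -
    have "pi * i / (2 * d) < pi / 2"
      using that assms pi_gt_zero by (simp add: field_simps)
    moreover have "pi * i / (2 * d) > - (pi / 2)"
    proof -
      have "0 \<le> pi * i / (2 * d)" by simp
      then show ?thesis using pi_gt_zero by linarith
    qed
    ultimately show ?thesis unfolding a_def by (simp add: cos_gt_zero_pi)
  qed
  have zi: "1 + z ^ i = w ^ i * complex_of_real (a i)" for i :: nat
  proof -
    have "z ^ i = exp (2 * (complex_of_real (pi * i / (2 * d)) * \<i>))"
      unfolding z_def exp_of_nat_mult[symmetric] using assms
      by (simp add: field_simps)
    moreover have "w ^ i = exp (complex_of_real (pi * i / (2 * d)) * \<i>)"
      unfolding w_def exp_of_nat_mult[symmetric] by (simp add: field_simps)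
    ultimately show ?thesis unfolding a_def using one_plus_exp[of "pi * i / (2 * d)"] by (simp only:)
  qed
  have hval: "poly (map_poly of_int (h_poly lam)) z = w ^ K * complex_of_real (A lam)"
    if "lam \<in> partitions r" for lam
  proof -
    have sl: "sum_list lam = r" using that by (simp add: partitions_def)
    have "poly (map_poly of_int (h_poly lam)) z
        = (\<Prod>i\<in>{1..r}. (w ^ i * complex_of_real (a i)) ^ (r div i - count_list lam i))"
      unfolding h_poly_def Let_def sl mult_part_def ev_prod ev_power ev_h zi ..
    also have "\<dots> = (\<Prod>i\<in>{1..r}. w ^ (i * (r div i - count_list lam i)))
        * complex_of_real (A lam)"
      unfolding A_def by (simp add: prod.distrib power_mult_distrib power_mult)
    also have "(\<Prod>i\<in>{1..r}. w ^ (i * (r div i - count_list lam i))) = w ^ K"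
      unfolding power_sum[symmetric] K_def exponent_sum[OF that] ..
    finally show ?thesis .
  qed
  have "poly (map_poly of_int ?S) z = w ^ K * complex_of_real (\<Sum>lam\<in>partitions r. A lam)"
    by (simp add: ev_sum hval sum_distrib_left)
  moreover have "(\<Sum>lam\<in>partitions r. A lam) > 0"
    by (rule sum_pos) (use finite_partitions partitions_ne apos in \<open>auto simp: A_def intro!: prod_pos\<close>)
  moreover have "w \<noteq> 0" unfolding w_def by simp
  ultimately show False using S0 by (simp del: of_real_sum add: of_real_sum[symmetric])
qed

end
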